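(* In the two-firm setting below, fix $t<T$ and current asset values $a_1=a_{1,t}>0$, $a_2=a_{2,t}>0$. Assume: - the asset correlation satisfies $\rho\in(-1,1)$; - the current equity prices satisfy $s_1,s_2>0$; - the equity Deltas satisfy $\Delta_{11},\Delta_{22}>0$ and $\Delta_{12},\Delta_{21}\ge 0$. Then the instantaneous equity correlation satisfies $\rho^s\ge\rho$.
   Context: Two-firm network model ($n=2$). Cross-holdings. $M^s_{12},M^s_{21},M^d_{12},M^d_{21}\in[0,1)$ are equity/debt cross-holding fractions: firm $i$ holds fraction $M^s_{ij}$ of firm $j$'s equity and fraction $M^d_{ij}$ of firm $j$'s debt. Diagonal entries are zero. Nominal debts are $d_1,d_2>0$. Payoffs at maturity. For terminal external asset values $\mathbf{a}_T\in(0,\infty)^2$, the terminal equity and debt values $\mathbf{x}^*(\mathbf{a}_T)=(s_1^*,s_2^*,r_1^*,r_2^* )$ are the unique solution of $$s_i=\max\Big\{0,\;a_{i,T}+\sum_j M^s_{ij}s_j+\sum_j M^d_{ij}r_j-d_i\Big\},$$ $$r_i=\min\Big\{d_i,\;a_{i,T}+\sum_j M^s_{ij}s_j+\sum_j M^d_{ij}r_j\Big\}.$$ Asset dynamics. Under the risk-neutral measure $Q$ the external assets follow the correlated geometric Brownian motion $$dA_{i,t}=rA_{i,t}\,dt+\sigma_iA_{i,t}\,dW_{i,t},$$ with interest rate $r$, volatilities $\sigma_1,\sigma_2>0$, and $d\langle W_1,W_2\rangle_t=\rho\,dt$. Prices and Deltas. With $\tau=T-t$, the time-$t$ equity prices are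 $$s_i=s_{i,t}=\mathbb{E}^Q_t\big[e^{-r\tau}s_i^*(\mathbf{A}_T)\big]$$ as functions of the current asset values $a_1,a_2$. The equity Deltas are $\Delta_{ij}=\partial s_{i,t}/\partial a_{j,t}$; write $\boldsymbol{\Delta}=(\Delta_{ij})$. Equity correlation. Let $\boldsymbol{\Sigma}=\begin{pmatrix}\sigma_1^2&\rho\sigma_1\sigma_2\\ \rho\sigma_1\sigma_2&\sigma_2^2\end{pmatrix}$ be the asset covariance matrix. The instantaneous equity covariance matrix is $$\boldsymbol{\Sigma}^s=\operatorname{diag}(s_1,s_2)^{-1}\,\boldsymbol{\Delta}\,\operatorname{diag}(a_1,a_2)\,\boldsymbol{\Sigma}\,\operatorname{diag}(a_1,a_2)\,\boldsymbol{\Delta}^T\operatorname{diag}(s_1,s_2)^{-1},$$ and the equity correlation is $\rho^s=\Sigma^s_{12}/\sqrt{\Sigma^s_{11}\Sigma^s_{22}}$. *)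

theory Defs
  imports "HOL-Probability.Probability"
begin

(* Firms are indexed by 1 and 2.  Vectors are nat-indexed functions; matrices
   are nat => nat => real, only entries with indices in {1,2} are relevant. *)

(* Clearing (fixed-point) equations at maturity.  Equity s and debt r values are
   required to vanish outside the index set {1,2}, so that the solution is a
   unique object when it is unique on {1,2}. *)
definition clearing ::
  "(nat \<Rightarrow> nat \<Rightarrow> real) \<Rightarrow> (nat \<Rightarrow> nat \<Rightarrow> real) \<Rightarrow> (nat \<Rightarrow> real) \<Rightarrow>
   (nat \<Rightarrow> real) \<Rightarrow> (nat \<Rightarrow> real) \<Rightarrow> (nat \<Rightarrow> real) \<Rightarrow> bool" where
  "clearing Ms Md d aT s r \<longleftrightarrow>
     (\<forall>i\<in>{1,2}.
        s i = max 0 (aT i + (\<Sum>j\<in>{1,2}. Ms i j * s j) + (\<Sum>j\<in>{1,2}. Md i j * r j) - d i)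
      \<and> r i = min (d i) (aT i + (\<Sum>j\<in>{1,2}. Ms i j * s j) + (\<Sum>j\<in>{1,2}. Md i j * r j)))
   \<and> (\<forall>i. i \<notin> {1,2} \<longrightarrow> s i = 0 \<and> r i = 0)"

definition terminal_equity ::
  "(nat \<Rightarrow> nat \<Rightarrow> real) \<Rightarrow> (nat \<Rightarrow> nat \<Rightarrow> real) \<Rightarrow> (nat \<Rightarrow> real) \<Rightarrow>
   (nat \<Rightarrow> real) \<Rightarrow> nat \<Rightarrow> real" where
  "terminal_equity Ms Md d aT = fst (THE (s, r). clearing Ms Md d aT s r)"

(* Terminal asset values A_T of the correlated GBM started at A_t = a, after time tau,
   written in terms of two independent standard normal variables (z1, z2):
   W_1 increment ~ sqrt tau * z1, W_2 increment ~ sqrt tau * (rho z1 + sqrt(1-rho^2) z2). *)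
definition terminal_assets ::
  "real \<Rightarrow> (nat \<Rightarrow> real) \<Rightarrow> real \<Rightarrow> real \<Rightarrow> (nat \<Rightarrow> real) \<Rightarrow> real \<times> real \<Rightarrow> nat \<Rightarrow> real" where
  "terminal_assets rf \<sigma> \<rho> \<tau> a z i =
     (if i = 1 then a 1 * exp ((rf - (\<sigma> 1)\<^sup>2 / 2) * \<tau> + \<sigma> 1 * sqrt \<tau> * fst z)
      else if i = 2 then a 2 * exp ((rf - (\<sigma> 2)\<^sup>2 / 2) * \<tau>
                 + \<sigma> 2 * sqrt \<tau> * (\<rho> * fst z + sqrt (1 - \<rho>\<^sup>2) * snd z))
      else 0)"

definition equity_price ::
  "(nat \<Rightarrow> nat \<Rightarrow> real) \<Rightarrow> (nat \<Rightarrow> nat \<Rightarrow> real) \<Rightarrow> (nat \<Rightarrow> real) \<Rightarrow>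
   real \<Rightarrow> (nat \<Rightarrow> real) \<Rightarrow> real \<Rightarrow> real \<Rightarrow> nat \<Rightarrow> (nat \<Rightarrow> real) \<Rightarrow> real" where
  "equity_price Ms Md d rf \<sigma> \<rho> \<tau> i a =
     exp (- rf * \<tau>) *
     (\<integral>z. std_normal_density (fst z) * std_normal_density (snd z) *
            terminal_equity Ms Md d (terminal_assets rf \<sigma> \<rho> \<tau> a z) i
      \<partial>(lborel :: (real \<times> real) measure))"

definition asset_cov :: "(nat \<Rightarrow> real) \<Rightarrow> real \<Rightarrow> nat \<Rightarrow> nat \<Rightarrow> real" where
  "asset_cov \<sigma> \<rho> k l = (if k = l then (\<sigma> k)\<^sup>2 else \<rho> * \<sigma> k * \<sigma> l)"

(* Sigma^s = diag(s)^{-1} Delta diag(a) Sigma diag(a) Delta^T diag(s)^{-1}, entrywise *)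
definition equity_cov ::
  "(nat \<Rightarrow> real) \<Rightarrow> real \<Rightarrow> (nat \<Rightarrow> real) \<Rightarrow> (nat \<Rightarrow> real) \<Rightarrow> (nat \<Rightarrow> nat \<Rightarrow> real)
   \<Rightarrow> nat \<Rightarrow> nat \<Rightarrow> real" where
  "equity_cov \<sigma> \<rho> a s \<Delta> i j =
     (1 / s i) * (\<Sum>k\<in>{1,2}. \<Sum>l\<in>{1,2}. \<Delta> i k * a k * asset_cov \<sigma> \<rho> k l * a l * \<Delta> j l)
     * (1 / s j)"

definition equity_corr ::
  "(nat \<Rightarrow> real) \<Rightarrow> real \<Rightarrow> (nat \<Rightarrow> real) \<Rightarrow> (nat \<Rightarrow> real) \<Rightarrow> (nat \<Rightarrow> nat \<Rightarrow> real) \<Rightarrow> real" where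
  "equity_corr \<sigma> \<rho> a s \<Delta> =
     equity_cov \<sigma> \<rho> a s \<Delta> 1 2 /
       sqrt (equity_cov \<sigma> \<rho> a s \<Delta> 1 1 * equity_cov \<sigma> \<rho> a s \<Delta> 2 2)"

end

theory Submission
  imports Defs
begin

lemma quad_pos: fixes p q r :: real
  assumes "p > 0" "q \<ge> 0" "-1 < r" "r < 1"
  shows "p*p + 2*r*p*q + q*q > 0"
proof -
  have "p*p + 2*r*p*q + q*q = (p + r*q)^2 + (1 - r^2)*q*q" by (simp add: power2_eq_square algebra_simps)
  moreover have "(1 - r^2) \<ge> 0" using assms by (simp add: abs_square_le_1 less_imp_le)
  moreover have "(p + r*q)^2 + (1 - r^2)*q*q > 0"
  proof (cases "q = 0")
    case True then show ?thesis using assms by simp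
  next
    case False
    have "1 - r^2 > 0" using assms by (simp add: abs_square_less_1)
    hence "(1 - r^2)*q*q > 0" using False assms by (simp add: mult_pos_pos)
    then show ?thesis by (smt (verit) zero_le_power2)
  qed
  ultimately show ?thesis by simp
qed

lemma core: fixes p q m n r :: real
  assumes p: "p > 0" and q: "q \<ge> 0" and m: "m \<ge> 0" and n: "n > 0" and r: "-1 < r" "r < 1"
  defines "A \<equiv> p*m + r*(p*n) + r*(q*m) + q*n"
  defines "B \<equiv> (p*p + 2*r*p*q + q*q) * (m*m + 2*r*m*n + n*n)"
  shows "A \<ge> r * sqrt B"
proof -
  define Z where "Z = p*n - q*m"
  have B: "B = A^2 + (1 - r^2) * Z^2"
    unfolding A_def B_def Z_def by (simp add: power2_eq_square algebra_simps)
  have r2: "1 - r^2 > 0" using r by (simp add: abs_square_less_1)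
  have pn: "p*n > 0" using p n by simp
  have qm: "q*m \<ge> 0" using q m by simp
  have absZ: "\<bar>Z\<bar> \<le> p*n + q*m" unfolding Z_def using pn qm by linarith
  have Bnn: "B \<ge> 0" using B r2 by (simp add: add_nonneg_nonneg)
  show ?thesis
  proof (cases "r \<ge> 0")
    case True
    have A1: "A \<ge> r * \<bar>Z\<bar>"
    proof -
      have "r * \<bar>Z\<bar> \<le> r * (p*n + q*m)" using True absZ by (simp add: mult_left_mono)
      moreover have "p*m \<ge> 0" "q*n \<ge> 0" using p q m n by simp_all
      ultimately show ?thesis unfolding A_def by (simp add: algebra_simps)
    qed
    have rZ: "r * \<bar>Z\<bar> \<ge> 0" using True by simp
    have "(r * \<bar>Z\<bar>)^2 \<le> A^2" using A1 rZ by (simp add: power_mono)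
    hence "r^2 * Z^2 \<le> A^2" by (simp add: power_mult_distrib)
    hence "(1 - r^2) * (r^2 * Z^2) \<le> (1 - r^2) * A^2" using r2 by (simp add: mult_left_mono)
    hence "r^2 * B \<le> A^2" unfolding B by (simp add: algebra_simps)
    hence "sqrt (r^2 * B) \<le> sqrt (A^2)" by (rule real_sqrt_le_mono)
    moreover have "sqrt (r^2 * B) = r * sqrt B" using True by (simp add: real_sqrt_mult)
    moreover have "sqrt (A^2) = A" using A1 rZ by simp
    ultimately show ?thesis by simp
  next
    case False
    show ?thesis
    proof (cases "A \<ge> 0")
      case True then show ?thesis using False by (smt (verit) real_sqrt_ge_zero Bnn mult_nonpos_nonneg)
    next
      case An: False
      define w where "w = min (p*n) (q*m)"
      have w2: "p*n + q*m - \<bar>Z\<bar> = 2*w" unfolding w_def Z_def by (auto simp add: min_def abs_if algebra_simps)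
      have wnn: "w \<ge> 0" unfolding w_def using pn qm by simp
      have ww: "w*w \<le> (p*m)*(q*n)"
      proof -
        have "w*w \<le> (p*n)*(q*m)" unfolding w_def using pn qm
          by (simp add: min_def mult_mono)
        thus ?thesis by (simp add: algebra_simps)
      qed
      have pmqn: "2*w \<le> p*m + q*n"
      proof -
        have "(2*w)^2 \<le> (p*m + q*n)^2"
        proof -
          have "(p*m + q*n)^2 = (p*m - q*n)^2 + 4*((p*m)*(q*n))" by (simp add: power2_eq_square algebra_simps)
          also have "\<dots> \<ge> 4*(w*w)" using ww by (smt (verit) zero_le_power2)
          finally show ?thesis by (simp add: power2_eq_square)
        qed
        moreover have "p*m + q*n \<ge> 0" using p q m n by simp
        ultimately show ?thesis using power2_le_imp_le by blast
      qed
      have "-A \<le> -r * \<bar>Z\<bar>"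
      proof -
        have "-A - (-r*\<bar>Z\<bar>) = -r*(p*n + q*m - \<bar>Z\<bar>) - (p*m + q*n)" unfolding A_def by (simp add: algebra_simps)
        also have "\<dots> = -r*(2*w) - (p*m+q*n)" using w2 by simp
        also have "\<dots> \<le> 2*w - (p*m+q*n)"
        proof -
          have "-r*(2*w) \<le> 1*(2*w)" using r wnn by (intro mult_right_mono) auto
          thus ?thesis by simp
        qed
        also have "\<dots> \<le> 0" using pmqn by simp
        finally show ?thesis by simp
      qed
      hence "(-A)^2 \<le> (-r*\<bar>Z\<bar>)^2" using An by (intro power_mono) auto
      hence "A^2 \<le> r^2 * Z^2" by (simp add: power_mult_distrib)
      hence "(1 - r^2) * A^2 \<le> (1 - r^2) * (r^2 * Z^2)" using r2 by (simp add: mult_left_mono)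
      hence "A^2 \<le> r^2 * B" unfolding B by (simp add: algebra_simps)
      hence "sqrt (A^2) \<le> sqrt (r^2 * B)" by (rule real_sqrt_le_mono)
      moreover have "sqrt (r^2 * B) = -r * sqrt B" using False by (simp add: real_sqrt_mult)
      moreover have "sqrt (A^2) = -A" using An by simp
      ultimately show ?thesis by simp
    qed
  qed
qed

theorem theorem1:
  fixes Ms Md :: "nat \<Rightarrow> nat \<Rightarrow> real" and d \<sigma> a s :: "nat \<Rightarrow> real"
    and \<Delta> :: "nat \<Rightarrow> nat \<Rightarrow> real" and rf \<rho> t T :: real
  assumes Ms_range: "\<forall>i\<in>{1,2}. \<forall>j\<in>{1,2}. 0 \<le> Ms i j \<and> Ms i j < 1"
    and Md_range: "\<forall>i\<in>{1,2}. \<forall>j\<in>{1,2}. 0 \<le> Md i j \<and> Md i j < 1"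
    and Ms_diag: "Ms 1 1 = 0" "Ms 2 2 = 0"
    and Md_diag: "Md 1 1 = 0" "Md 2 2 = 0"
    and d_pos: "d 1 > 0" "d 2 > 0"
    and \<sigma>_pos: "\<sigma> 1 > 0" "\<sigma> 2 > 0"
    and tT: "t < T"
    and a_pos: "a 1 > 0" "a 2 > 0"
    and \<rho>_range: "-1 < \<rho>" "\<rho> < 1"
    and s_def: "\<forall>i\<in>{1,2}. s i = equity_price Ms Md d rf \<sigma> \<rho> (T - t) i a"
    and s_pos: "s 1 > 0" "s 2 > 0"
    and Delta: "\<forall>i\<in>{1,2}. \<forall>j\<in>{1,2}.
                  ((\<lambda>x. equity_price Ms Md d rf \<sigma> \<rho> (T - t) i (a(j := x)))
                     has_real_derivative \<Delta> i j) (at (a j))"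
    and Delta_diag: "\<Delta> 1 1 > 0" "\<Delta> 2 2 > 0"
    and Delta_off: "\<Delta> 1 2 \<ge> 0" "\<Delta> 2 1 \<ge> 0"
  shows "equity_corr \<sigma> \<rho> a s \<Delta> \<ge> \<rho>"
proof -
  define p where "p = \<Delta> 1 1 * (a 1 * \<sigma> 1)"
  define q where "q = \<Delta> 1 2 * (a 2 * \<sigma> 2)"
  define m where "m = \<Delta> 2 1 * (a 1 * \<sigma> 1)"
  define n where "n = \<Delta> 2 2 * (a 2 * \<sigma> 2)"
  have pp: "p > 0" "n > 0" unfolding p_def n_def using Delta_diag a_pos \<sigma>_pos by simp_all
  have qq: "q \<ge> 0" "m \<ge> 0" unfolding q_def m_def using Delta_off a_pos \<sigma>_pos by simp_all
  define A where "A = p*m + \<rho>*(p*n) + \<rho>*(q*m) + q*n"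
  define U where "U = p*p + 2*\<rho>*p*q + q*q"
  define V where "V = m*m + 2*\<rho>*m*n + n*n"
  have c12: "equity_cov \<sigma> \<rho> a s \<Delta> 1 2 = A / (s 1 * s 2)"
    unfolding equity_cov_def asset_cov_def A_def p_def q_def m_def n_def
    by (simp add: power2_eq_square field_simps)
  have c11: "equity_cov \<sigma> \<rho> a s \<Delta> 1 1 = U / (s 1 * s 1)"
    unfolding equity_cov_def asset_cov_def U_def p_def q_def
    by (simp add: power2_eq_square field_simps)
  have c22: "equity_cov \<sigma> \<rho> a s \<Delta> 2 2 = V / (s 2 * s 2)"
    unfolding equity_cov_def asset_cov_def V_def m_def n_def
    by (simp add: power2_eq_square field_simps)
  have U: "U > 0" unfolding U_def using quad_pos[OF pp(1) qq(1) \<rho>_range] .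
  have V0: "n*n + 2*\<rho>*n*m + m*m > 0" using quad_pos[OF pp(2) qq(2) \<rho>_range] .
  have V: "V > 0" using V0 unfolding V_def by (simp add: algebra_simps)
  have key: "A \<ge> \<rho> * sqrt (U*V)"
    using core[OF pp(1) qq(1) qq(2) pp(2) \<rho>_range] unfolding A_def U_def V_def by simp
  have "U / (s 1 * s 1) * (V / (s 2 * s 2)) = (U*V) / (s 1 * s 2)^2"
    by (simp add: power2_eq_square field_simps)
  have sq: "sqrt (equity_cov \<sigma> \<rho> a s \<Delta> 1 1 * equity_cov \<sigma> \<rho> a s \<Delta> 2 2) = sqrt (U*V) / (s 1 * s 2)"
  proof -
    have "sqrt (equity_cov \<sigma> \<rho> a s \<Delta> 1 1 * equity_cov \<sigma> \<rho> a s \<Delta> 2 2) = sqrt ((U*V) / (s 1 * s 2)^2)"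
      unfolding c11 c22 using \<open>U / (s 1 * s 1) * (V / (s 2 * s 2)) = (U*V) / (s 1 * s 2)^2\<close> by simp
    also have "\<dots> = sqrt (U*V) / (s 1 * s 2)" using s_pos by (simp add: real_sqrt_divide)
    finally show ?thesis .
  qed
  have spos: "s 1 * s 2 > 0" using s_pos by simp
  have sUV: "sqrt (U*V) > 0" using U V by simp
  have "equity_corr \<sigma> \<rho> a s \<Delta> = A / sqrt (U*V)"
    unfolding equity_corr_def c12 sq using s_pos by (simp add: field_simps)
  also have "\<dots> \<ge> \<rho>" using key sUV by (simp add: pos_le_divide_eq)
  finally show ?thesis .
qed

end
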